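(* Let $G$ be a bipartite graph between $U$ and $V$ with edge weights in $\{-1,+1\}$, and let $d>0$. Suppose every $u\in U$ satisfies $|F(u)|\le 1.2d$ and $|F^+(u)|\ge 0.45d$. Let $S\subseteq U$ have the $11/12$-strong unique neighbour property, let $h=\mathbf 1_S$ and $y=\operatorname{sgn}(Gh)$, i.e. $y_v=\operatorname{sgn}\big(\sum_{u\in S,\,v\in F(u)}w(u,v)\big)$. Define $\hat h\in\{0,1\}^U$ by $\hat h_u=1$ if and only if $|\{v\in F^+(u): y_v=1\}|>0.3d$ (equivalently $\hat h=\operatorname{sgn}(M^{T}y-0.3d\,\mathbf 1)$ where $M$ is the $V\times U$ $0/1$ indicator matrix of the $+1$ edges). Then $\hat h=h$.
   Context: $\operatorname{sgn}(x)=1$ if $x>0$ and $0$ otherwise, coordinatewise. For $u\in U$, $F(u)\subseteq V$ is its set of neighbours and $F^+(u)=\{v\in F(u):w(u,v)=+1\}$; for $T\subseteq U$, $F(T)=\bigcup_{u\in T}F(u)$. For $u\in U$ and $S\subseteq U$, the unique neighbours of $u$ w.r.t. $S$ are $\mathrm{UF}(u,S)=\{v\in F(u): v\notin F(S\setminus\{u\})\}$. A node $u$ has the $(1-\epsilon)$-unique neighbour property w.r.t. $S$ if $\sum_{v\in \mathrm{UF}(u,S)}|w(u,v)|\ge(1-\epsilon)\sum_{v\in F(u)}|w(u,v)|$; the set $S$ has the $(1-\epsilon)$-strong unique neighbour property if every $u\in U$ (whether or not $u\in S$) has the $(1-\epsilon)$-unique neighbour property w.r.t. $S$. *)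

theory Defs
  imports Complex_Main
begin

definition sgn01 :: "real \<Rightarrow> real" where
  "sgn01 x = (if x > 0 then 1 else 0)"

definition nbrs :: "('a \<Rightarrow> 'b \<Rightarrow> bool) \<Rightarrow> 'b set \<Rightarrow> 'a \<Rightarrow> 'b set" where
  "nbrs E V u = {v \<in> V. E u v}"

definition pos_nbrs :: "('a \<Rightarrow> 'b \<Rightarrow> bool) \<Rightarrow> ('a \<Rightarrow> 'b \<Rightarrow> real) \<Rightarrow> 'b set \<Rightarrow> 'a \<Rightarrow> 'b set" where
  "pos_nbrs E w V u = {v \<in> nbrs E V u. w u v = 1}"

definition nbrs_set :: "('a \<Rightarrow> 'b \<Rightarrow> bool) \<Rightarrow> 'b set \<Rightarrow> 'a set \<Rightarrow> 'b set" where
  "nbrs_set E V T = (\<Union>u\<in>T. nbrs E V u)"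

definition unique_nbrs :: "('a \<Rightarrow> 'b \<Rightarrow> bool) \<Rightarrow> 'b set \<Rightarrow> 'a \<Rightarrow> 'a set \<Rightarrow> 'b set" where
  "unique_nbrs E V u S = {v \<in> nbrs E V u. v \<notin> nbrs_set E V (S - {u})}"

definition has_unique_nbr_prop ::
  "('a \<Rightarrow> 'b \<Rightarrow> bool) \<Rightarrow> ('a \<Rightarrow> 'b \<Rightarrow> real) \<Rightarrow> 'b set \<Rightarrow> real \<Rightarrow> 'a \<Rightarrow> 'a set \<Rightarrow> bool" where
  "has_unique_nbr_prop E w V \<epsilon> u S \<longleftrightarrow>
     (\<Sum>v\<in>unique_nbrs E V u S. \<bar>w u v\<bar>) \<ge> (1 - \<epsilon>) * (\<Sum>v\<in>nbrs E V u. \<bar>w u v\<bar>)"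

definition strong_unique_nbr_prop ::
  "('a \<Rightarrow> 'b \<Rightarrow> bool) \<Rightarrow> ('a \<Rightarrow> 'b \<Rightarrow> real) \<Rightarrow> 'a set \<Rightarrow> 'b set \<Rightarrow> real \<Rightarrow> 'a set \<Rightarrow> bool" where
  "strong_unique_nbr_prop E w U V \<epsilon> S \<longleftrightarrow> (\<forall>u\<in>U. has_unique_nbr_prop E w V \<epsilon> u S)"

definition decode_y ::
  "('a \<Rightarrow> 'b \<Rightarrow> bool) \<Rightarrow> ('a \<Rightarrow> 'b \<Rightarrow> real) \<Rightarrow> 'a set \<Rightarrow> 'b \<Rightarrow> real" where
  "decode_y E w S v = sgn01 (\<Sum>u\<in>{u\<in>S. E u v}. w u v)"

definition decode_h ::
  "('a \<Rightarrow> 'b \<Rightarrow> bool) \<Rightarrow> ('a \<Rightarrow> 'b \<Rightarrow> real) \<Rightarrow> 'b set \<Rightarrow> real \<Rightarrow> 'a set \<Rightarrow> 'a \<Rightarrow> real" where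
  "decode_h E w V d S u =
     sgn01 (real (card {v \<in> pos_nbrs E w V u. decode_y E w S v = 1}) - 0.3 * d)"

end

theory Submission
  imports Defs
begin

theorem mainTheorem4:
  fixes U :: "'a set" and V :: "'b set"
    and E :: "'a \<Rightarrow> 'b \<Rightarrow> bool" and w :: "'a \<Rightarrow> 'b \<Rightarrow> real"
    and d :: real and S :: "'a set"
  assumes "finite U" and "finite V"
    and "\<And>u v. E u v \<Longrightarrow> u \<in> U \<and> v \<in> V"
    and "\<And>u v. E u v \<Longrightarrow> w u v = 1 \<or> w u v = -1"
    and "d > 0"
    and "\<And>u. u \<in> U \<Longrightarrow> real (card (nbrs E V u)) \<le> 1.2 * d"
    and "\<And>u. u \<in> U \<Longrightarrow> real (card (pos_nbrs E w V u)) \<ge> 0.45 * d"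
    and "S \<subseteq> U"
    and "strong_unique_nbr_prop E w U V (1/12) S"
  shows "\<forall>u\<in>U. decode_h E w V d S u = (if u \<in> S then 1 else 0)"
proof
  fix u assume uU: "u \<in> U"
  define N where "N = nbrs E V u"
  define UQ where "UQ = unique_nbrs E V u S"
  define P where "P = pos_nbrs E w V u"
  define Y where "Y = {v \<in> P. decode_y E w S v = 1}"
  have fN: "finite N" using assms(2) by (simp add: N_def nbrs_def)
  have UQN: "UQ \<subseteq> N" by (auto simp: UQ_def N_def unique_nbrs_def)
  have PN: "P \<subseteq> N" by (auto simp: P_def N_def pos_nbrs_def)
  have fUQ: "finite UQ" using fN UQN finite_subset by blast
  have fP: "finite P" using fN PN finite_subset by blast
  have absw: "\<And>A. A \<subseteq> N \<Longrightarrow> (\<Sum>v\<in>A. \<bar>w u v\<bar>) = real (card A)"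
  proof -
    fix A assume "A \<subseteq> N"
    hence "\<forall>v\<in>A. \<bar>w u v\<bar> = 1" using assms(4) by (fastforce simp: N_def nbrs_def)
    thus "(\<Sum>v\<in>A. \<bar>w u v\<bar>) = real (card A)" by simp
  qed
  have "has_unique_nbr_prop E w V (1/12) u S" using assms(9) uU
    by (simp add: strong_unique_nbr_prop_def)
  hence "real (card UQ) \<ge> (1 - 1/12) * real (card N)"
    using absw[OF UQN] absw[of N]
    by (simp add: has_unique_nbr_prop_def UQ_def N_def)
  moreover have "card (N - UQ) = card N - card UQ" using card_Diff_subset fUQ UQN by blast
  moreover have "card UQ \<le> card N" using card_mono fN UQN by blast
  ultimately have "real (card (N - UQ)) = real (card N) - real (card UQ)"
    by (simp add: of_nat_diff)
  hence diff: "real (card (N - UQ)) \<le> 0.1 * d"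
    using assms(6)[OF uU] \<open>real (card UQ) \<ge> (1 - 1/12) * real (card N)\<close>
    unfolding N_def by (simp add: field_simps)
  have fD: "finite (N - UQ)" using fN by simp
  show "decode_h E w V d S u = (if u \<in> S then 1 else 0)"
  proof (cases "u \<in> S")
    case True
    have "P \<inter> UQ \<subseteq> Y"
    proof
      fix v assume v: "v \<in> P \<inter> UQ"
      hence Euv: "E u v" and wuv: "w u v = 1" by (auto simp: P_def pos_nbrs_def nbrs_def)
      have "{u'\<in>S. E u' v} = {u}"
      proof -
        have "\<And>u'. u' \<in> S \<Longrightarrow> E u' v \<Longrightarrow> u' = u"
        proof (rule ccontr)
          fix u' assume "u' \<in> S" "E u' v" "u' \<noteq> u"
          hence "v \<in> nbrs_set E V (S - {u})" using assms(3)[of u' v]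
            by (auto simp: nbrs_set_def nbrs_def)
          thus False using v by (auto simp: UQ_def unique_nbrs_def)
        qed
        thus ?thesis using True Euv by blast
      qed
      thus "v \<in> Y" using v wuv by (simp add: Y_def decode_y_def sgn01_def)
    qed
    hence c1: "card (P \<inter> UQ) \<le> card Y" by (rule card_mono[rotated]) (simp add: Y_def fP)
    have "P \<subseteq> (P \<inter> UQ) \<union> (N - UQ)" using PN by auto
    hence "card P \<le> card ((P \<inter> UQ) \<union> (N - UQ))"
      using fD fP by (intro card_mono) simp_all
    also have "\<dots> \<le> card (P \<inter> UQ) + card (N - UQ)" by (rule card_Un_le)
    finally have "card P \<le> card (P \<inter> UQ) + card (N - UQ)" .
    with c1 have "card P \<le> card Y + card (N - UQ)" by linarith
    hence "real (card P) \<le> real (card Y) + real (card (N - UQ))" by linarith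
    moreover have "real (card P) \<ge> 0.45 * d" using assms(7)[OF uU] by (simp add: P_def)
    ultimately have "real (card Y) > 0.3 * d"
      using diff assms(5) by simp
    thus ?thesis using True by (simp add: decode_h_def sgn01_def Y_def P_def)
  next
    case False
    have "Y \<subseteq> N - UQ"
    proof
      fix v assume v: "v \<in> Y"
      hence vN: "v \<in> N" using PN by (auto simp: Y_def)
      show "v \<in> N - UQ"
      proof
        show "v \<in> N" by fact
        show "v \<notin> UQ"
        proof
          assume "v \<in> UQ"
          hence "{u'\<in>S. E u' v} = {}" using False assms(3)
            by (auto simp: UQ_def unique_nbrs_def nbrs_set_def nbrs_def)
          hence "decode_y E w S v = 0" unfolding decode_y_def sgn01_def by (simp only: sum.empty) simp
          thus False using v by (simp add: Y_def)
        qed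
      qed
    qed
    hence "card Y \<le> card (N - UQ)" using card_mono fD by blast
    hence "real (card Y) \<le> 0.3 * d" using diff assms(5) by linarith
    thus ?thesis using False by (simp add: decode_h_def sgn01_def Y_def P_def)
  qed
qed

end
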